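(* Let $N$ be a positive integer and let $X$ be a $\{0,1,\dots,N\}$-valued random variable. Let $C$ be a finite set and let $\rho$ be a probability measure on $\{0,1,\dots,N\}^C$. Assume that for every $c\in C$, the distribution of $X$ is stochastically dominated by the $c$-marginal of $\rho$. Let $H$ be a $C$-valued random variable (defined on the same probability space as $X$, with arbitrary joint law). Let $Y$ be the random element of $\{0,1,\dots,N\}^C$ defined by $Y(c)=X\,\mathbf{1}_{H=c}$. Then the distribution of $Y$ is stochastically dominated by $\rho$.
   Context: $\{0,1,\dots,N\}^C$ carries the product order. Stochastic domination of $\mu$ by $\nu$ means there exist $X\sim\mu$, $Y\sim\nu$ on a common probability space with $X\le Y$ almost surely. *)

theory Defs
  imports "HOL-Probability.Probability"
begin

definition stoch_dom :: "'a::order pmf \<Rightarrow> 'a pmf \<Rightarrow> bool" where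
  "stoch_dom \<mu> \<nu> \<longleftrightarrow>
     (\<exists>p :: ('a \<times> 'a) pmf. map_pmf fst p = \<mu> \<and> map_pmf snd p = \<nu> \<and>
        (\<forall>xy\<in>set_pmf p. fst xy \<le> snd xy))"

end

theory Submission imports Defs begin

lemma greedy:
  fixes xs :: "'i list" and b :: "'i \<Rightarrow> real" and NB :: "'i \<Rightarrow> 'z set"
    and w :: "'z \<Rightarrow> real" and Z :: "'z set"
  assumes "finite Z" "distinct xs" "\<And>i. b i \<ge> 0" "\<And>z. w z \<ge> 0"
    and "\<And>ys i zs. xs = ys @ i # zs \<Longrightarrow> sum_list (map b ys) + b i \<le> sum w (NB i \<inter> Z)"
  shows "\<exists>T. (\<forall>i z. T i z \<ge> 0) \<and> (\<forall>i\<in>set xs. sum (T i) Z = b i)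
     \<and> (\<forall>z\<in>Z. (\<Sum>i\<in>set xs. T i z) \<le> w z) \<and> (\<forall>i z. T i z \<noteq> 0 \<longrightarrow> z \<in> NB i \<inter> Z)"
  using assms(2-5)
proof (induction xs arbitrary: w)
  case Nil
  then show ?case by (intro exI[of _ "\<lambda>i z. 0"]) auto
next
  case (Cons a xs)
  define W where "W = sum w (NB a \<inter> Z)"
  define d where "d z = (if z \<in> NB a \<inter> Z \<and> W > 0 then w z * b a / W else 0)" for z
  have ba: "b a \<le> W" using Cons.prems(4)[of "[]" a xs] by (simp add: W_def)
  have Wnn: "W \<ge> 0" unfolding W_def using Cons.prems(3) by (simp add: sum_nonneg)
  have dnn: "d z \<ge> 0" for z using Cons.prems(2)[of a] Cons.prems(3)[of z] Wnn by (simp add: d_def)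
  have dle: "d z \<le> w z" for z
  proof (cases "z \<in> NB a \<inter> Z \<and> W > 0")
    case True
    then have "w z * b a / W \<le> w z * W / W"
      using ba Cons.prems(3)[of z] by (intro divide_right_mono mult_left_mono) auto
    then show ?thesis using True by (simp add: d_def)
  next
    case False then show ?thesis using Cons.prems(3)[of z] unfolding d_def by auto
  qed
  have dsum: "sum d Z = b a"
  proof (cases "W > 0")
    case True
    have "sum d Z = sum d (NB a \<inter> Z)"
      by (rule sum.mono_neutral_right) (auto simp: d_def assms(1))
    also have "\<dots> = (\<Sum>z\<in>NB a \<inter> Z. w z) * b a / W"
      using True by (simp add: d_def sum_divide_distrib sum_distrib_right)
    also have "\<dots> = b a" using True by (simp add: W_def)
    finally show ?thesis .
  next
    case False
    then have "b a = 0" using ba Cons.prems(2)[of a] by simp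
    then show ?thesis using False by (simp add: d_def)
  qed
  define w' where "w' z = w z - d z" for z
  have IH: "\<exists>T. (\<forall>i z. T i z \<ge> 0) \<and> (\<forall>i\<in>set xs. sum (T i) Z = b i)
     \<and> (\<forall>z\<in>Z. (\<Sum>i\<in>set xs. T i z) \<le> w' z) \<and> (\<forall>i z. T i z \<noteq> 0 \<longrightarrow> z \<in> NB i \<inter> Z)"
  proof (rule Cons.IH)
    show "distinct xs" using Cons.prems(1) by simp
    show "0 \<le> b i" for i by (rule Cons.prems(2))
    show "0 \<le> w' z" for z using dle[of z] by (simp add: w'_def)
    fix ys i zs assume xs: "xs = ys @ i # zs"
    have "sum_list (map b (a # ys)) + b i \<le> sum w (NB i \<inter> Z)"
      using Cons.prems(4)[of "a # ys" i zs] xs by simp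
    moreover have "sum d (NB i \<inter> Z) \<le> sum d Z"
      using dnn assms(1) by (intro sum_mono2) auto
    ultimately show "sum_list (map b ys) + b i \<le> sum w' (NB i \<inter> Z)"
      using dsum by (simp add: w'_def sum_subtractf)
  qed
  then obtain T where T: "\<forall>i z. T i z \<ge> 0" "\<forall>i\<in>set xs. sum (T i) Z = b i"
     "\<forall>z\<in>Z. (\<Sum>i\<in>set xs. T i z) \<le> w' z" "\<forall>i z. T i z \<noteq> 0 \<longrightarrow> z \<in> NB i \<inter> Z"
    by blast
  define T' where "T' = T(a := d)"
  have anot: "a \<notin> set xs" using Cons.prems(1) by simp
  have s: "(\<Sum>i\<in>set xs. T' i z) = (\<Sum>i\<in>set xs. T i z)" for z
    using anot by (intro sum.cong) (auto simp: T'_def)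
  show ?case
  proof (intro exI[of _ T'] conjI)
    show "\<forall>i z. 0 \<le> T' i z" using T(1) dnn by (simp add: T'_def)
    show "\<forall>i\<in>set (a # xs). sum (T' i) Z = b i" using T(2) dsum anot by (auto simp: T'_def)
    show "\<forall>z\<in>Z. (\<Sum>i\<in>set (a # xs). T' i z) \<le> w z"
      using T(3) anot s by (auto simp: T'_def w'_def)
    show "\<forall>i z. T' i z \<noteq> 0 \<longrightarrow> z \<in> NB i \<inter> Z"
      using T(4) by (auto simp: T'_def d_def split: if_splits)
  qed
qed

lemma meas_fin:
  assumes "finite S" "set_pmf p \<subseteq> S"
  shows "measure (measure_pmf p) A = sum (pmf p) (A \<inter> S)"
proof -
  have "sum (pmf p) (A \<inter> S) = sum (pmf p) (A \<inter> set_pmf p)"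
    using assms by (intro sum.mono_neutral_right) (auto simp: set_pmf_eq)
  also have "\<dots> = measure (measure_pmf p) (A \<inter> set_pmf p)"
    using assms by (intro measure_measure_pmf_finite[symmetric]) (auto intro: finite_subset)
  also have "\<dots> = measure (measure_pmf p) A" by (rule measure_Int_set_pmf)
  finally show ?thesis by simp
qed

theorem lemma2p11:
  fixes N :: nat
    and XH :: "(nat \<times> 'c::finite) pmf"
    and \<rho> :: "('c \<Rightarrow> nat) pmf"
  assumes "N > 0"
    and "\<forall>xh\<in>set_pmf XH. fst xh \<le> N"
    and "\<forall>f\<in>set_pmf \<rho>. \<forall>c. f c \<le> N"
    and "\<forall>c. stoch_dom (map_pmf fst XH) (map_pmf (\<lambda>f. f c) \<rho>)"
  shows "stoch_dom (map_pmf (\<lambda>xh. (\<lambda>c. if snd xh = c then fst xh else 0)) XH) \<rho>"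
proof -
  define I where "I = set_pmf XH"
  define Z where "Z = set_pmf \<rho>"
  have finI: "finite I"
    by (rule finite_subset[of _ "{..N} \<times> UNIV"]) (use assms(2) in \<open>auto simp: I_def\<close>)
  have finZ: "finite Z"
  proof (rule finite_subset)
    show "Z \<subseteq> {f. \<forall>x. (x \<in> UNIV \<longrightarrow> f x \<in> {..N}) \<and> (x \<notin> UNIV \<longrightarrow> f x = 0)}"
      using assms(3) by (auto simp: Z_def)
    show "finite {f. \<forall>x. (x \<in> UNIV \<longrightarrow> f x \<in> {..N}) \<and> (x \<notin> (UNIV::'c set) \<longrightarrow> f x = (0::nat))}"
      by (rule finite_set_of_finite_funs) auto
  qed
  obtain xs0 where xs0: "distinct xs0" "set xs0 = I" using finite_distinct_list[OF finI] by blast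
  define xs where "xs = rev (sort_key fst xs0)"
  have xsd: "distinct xs" and xsI: "set xs = I" using xs0 by (auto simp: xs_def)
  have sorted: "\<forall>j\<in>set ys. fst i \<le> fst j" if "xs = ys @ i # zs" for ys i zs
  proof -
    have "sort_key fst xs0 = rev xs" by (simp add: xs_def)
    also have "\<dots> = rev zs @ i # rev ys" using that by simp
    finally have "sort_key fst xs0 = rev zs @ i # rev ys" .
    moreover have "sorted (map fst (sort_key fst xs0))" by (rule sorted_sort_key)
    ultimately have "sorted (map fst (rev zs) @ fst i # map fst (rev ys))" by simp
    then show ?thesis by (auto simp: sorted_append)
  qed
  define NB where "NB i = {f. fst i \<le> f (snd i)}" for i :: "nat \<times> 'c"
  have cond: "sum_list (map (pmf XH) ys) + pmf XH i \<le> sum (pmf \<rho>) (NB i \<inter> Z)"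
    if xs: "xs = ys @ i # zs" for ys i zs
  proof -
    have d: "distinct ys" "i \<notin> set ys" using xsd xs by auto
    have sub: "insert i (set ys) \<subseteq> {j. fst i \<le> fst j} \<inter> I"
      using sorted[OF xs] xsI xs by auto
    have "sum_list (map (pmf XH) ys) + pmf XH i = sum (pmf XH) (insert i (set ys))"
      using d by (simp add: sum_list_distinct_conv_sum_set)
    also have "\<dots> \<le> sum (pmf XH) ({j. fst i \<le> fst j} \<inter> I)"
      using sub finI by (intro sum_mono2) auto
    also have "\<dots> = measure XH {j. fst i \<le> fst j}"
      using finI by (intro meas_fin[symmetric]) (auto simp: I_def)
    also have "\<dots> = measure (map_pmf fst XH) {x. fst i \<le> x}" by simp
    also have "\<dots> \<le> measure (map_pmf (\<lambda>f. f (snd i)) \<rho>) {y. \<exists>x\<in>{x. fst i \<le> x}. x \<le> y}"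
    proof (rule rel_pmf_measureD)
      from assms(4) obtain p where p: "map_pmf fst p = map_pmf fst XH"
        "map_pmf snd p = map_pmf (\<lambda>f. f (snd i)) \<rho>" "\<forall>xy\<in>set_pmf p. fst xy \<le> snd xy"
        unfolding stoch_dom_def by blast
      show "rel_pmf (\<le>) (map_pmf fst XH) (map_pmf (\<lambda>f. f (snd i)) \<rho>)"
        by (rule rel_pmf.intros[of p]) (use p in auto)
    qed
    also have "\<dots> = measure \<rho> (NB i)"
      by (simp add: NB_def vimage_def) (smt (verit) Collect_cong order.refl order_trans)
    also have "\<dots> = sum (pmf \<rho>) (NB i \<inter> Z)"
      using finZ by (intro meas_fin) (auto simp: Z_def)
    finally show ?thesis .
  qed
  obtain T where T: "\<forall>i z. T i z \<ge> 0" "\<forall>i\<in>set xs. sum (T i) Z = pmf XH i"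
     "\<forall>z\<in>Z. (\<Sum>i\<in>set xs. T i z) \<le> pmf \<rho> z" "\<forall>i z. T i z \<noteq> 0 \<longrightarrow> z \<in> NB i \<inter> Z"
    using greedy[OF finZ xsd, of "pmf XH" "pmf \<rho>" NB] cond by (auto simp: pmf_nonneg)
  define f where "f = (\<lambda>(i,z). if i \<in> I then T i z else 0)"
  have fnn: "\<And>x. 0 \<le> f x" using T(1) by (auto simp: f_def)
  have fsum: "(\<Sum>x\<in>I \<times> Z. f x) = 1"
  proof -
    have "(\<Sum>x\<in>I \<times> Z. f x) = (\<Sum>(i,z)\<in>I \<times> Z. T i z)"
      by (rule sum.cong) (auto simp: f_def)
    also have "\<dots> = (\<Sum>i\<in>I. \<Sum>z\<in>Z. T i z)"
      by (simp add: sum.cartesian_product)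
    also have "\<dots> = (\<Sum>i\<in>I. pmf XH i)" using T(2) xsI by simp
    also have "\<dots> = 1" using finI by (intro sum_pmf_eq_1) (auto simp: I_def)
    finally show ?thesis .
  qed
  have fout: "f x = 0" if "x \<notin> I \<times> Z" for x
    using T(4) that by (cases x) (auto simp: f_def)
  have prob: "(\<integral>\<^sup>+x. ennreal (f x) \<partial>count_space UNIV) = 1"
  proof -
    have "(\<integral>\<^sup>+x. ennreal (f x) \<partial>count_space UNIV) = (\<Sum>x\<in>I \<times> Z. ennreal (f x))"
      using finI finZ fout by (intro nn_integral_count_space') auto
    also have "\<dots> = ennreal (\<Sum>x\<in>I \<times> Z. f x)" using fnn by (simp add: sum_ennreal)
    finally show ?thesis using fsum by simp
  qed
  define pq where "pq = embed_pmf f"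
  have pmfpq: "pmf pq x = f x" for x unfolding pq_def by (rule pmf_embed_pmf[OF fnn prob])
  have setpq: "set_pmf pq \<subseteq> I \<times> Z" using fout by (auto simp: set_pmf_eq pmfpq)
  have fin2: "finite (I \<times> Z)" using finI finZ by simp
  have m1: "map_pmf fst pq = XH"
  proof (rule pmf_eqI)
    fix i
    have "pmf (map_pmf fst pq) i = sum (pmf pq) (fst -` {i} \<inter> (I \<times> Z))"
      by (simp add: pmf_map meas_fin[OF fin2 setpq])
    also have "\<dots> = pmf XH i"
    proof (cases "i \<in> I")
      case True
      have "fst -` {i} \<inter> (I \<times> Z) = {i} \<times> Z" using True by auto
      then have "sum (pmf pq) (fst -` {i} \<inter> (I \<times> Z)) = (\<Sum>x\<in>{i} \<times> Z. f x)"
        by (simp add: pmfpq)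
      also have "\<dots> = (\<Sum>z\<in>Z. f (i, z))"
        by (rule sum.reindex_bij_witness[where j=snd and i="Pair i"]) auto
      also have "\<dots> = sum (T i) Z" using True by (simp add: f_def)
      finally show ?thesis using True T(2) xsI by simp
    next
      case False
      then have "fst -` {i} \<inter> (I \<times> Z) = {}" by auto
      then show ?thesis using False by (simp add: I_def set_pmf_eq)
    qed
    finally show "pmf (map_pmf fst pq) i = pmf XH i" .
  qed
  define s where "s z = (\<Sum>i\<in>I. T i z)" for z
  have sle: "s z \<le> pmf \<rho> z" if "z \<in> Z" for z using T(3) xsI that by (simp add: s_def)
  have ssum: "sum s Z = sum (pmf \<rho>) Z"
  proof -
    have "sum s Z = (\<Sum>x\<in>I \<times> Z. f x)"
      unfolding s_def by (subst sum.swap) (auto simp: sum.cartesian_product f_def intro!: sum.cong)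
    also have "\<dots> = sum (pmf \<rho>) Z"
      using fsum finZ by (simp add: sum_pmf_eq_1 Z_def)
    finally show ?thesis .
  qed
  have m2: "map_pmf snd pq = \<rho>"
  proof (rule pmf_eqI)
    fix z
    have "pmf (map_pmf snd pq) z = sum (pmf pq) (snd -` {z} \<inter> (I \<times> Z))"
      by (simp add: pmf_map meas_fin[OF fin2 setpq])
    also have "\<dots> = pmf \<rho> z"
    proof (cases "z \<in> Z")
      case True
      have "snd -` {z} \<inter> (I \<times> Z) = I \<times> {z}" using True by auto
      then have "sum (pmf pq) (snd -` {z} \<inter> (I \<times> Z)) = (\<Sum>x\<in>I \<times> {z}. f x)"
        by (simp add: pmfpq)
      also have "\<dots> = (\<Sum>i\<in>I. f (i, z))"
        by (rule sum.reindex_bij_witness[where j=fst and i="\<lambda>a. (a, z)"]) auto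
      also have "\<dots> = s z" unfolding s_def by (rule sum.cong) (auto simp: f_def)
      finally have "sum (pmf pq) (snd -` {z} \<inter> (I \<times> Z)) = s z" .
      also have "\<dots> = pmf \<rho> z"
        using sum_mono_inv[OF ssum sle True finZ] .
      finally show ?thesis .
    next
      case False
      then have "snd -` {z} \<inter> (I \<times> Z) = {}" by auto
      then show ?thesis using False by (simp add: Z_def set_pmf_eq)
    qed
    finally show "pmf (map_pmf snd pq) z = pmf \<rho> z" .
  qed
  define Y where "Y = (\<lambda>xh::nat \<times> 'c. (\<lambda>c. if snd xh = c then fst xh else 0))"
  define p where "p = map_pmf (\<lambda>(i,z). (Y i, z)) pq"
  show ?thesis
    unfolding stoch_dom_def
  proof (intro exI[of _ p] conjI ballI)
    show "map_pmf fst p = map_pmf (\<lambda>xh. (\<lambda>c. if snd xh = c then fst xh else 0)) XH"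
      unfolding p_def m1[symmetric] Y_def by (simp add: pmf.map_comp o_def case_prod_beta)
    show "map_pmf snd p = \<rho>"
      unfolding p_def m2[symmetric] by (simp add: pmf.map_comp o_def case_prod_beta)
    fix xy assume "xy \<in> set_pmf p"
    then obtain i z where iz: "(i,z) \<in> set_pmf pq" "xy = (Y i, z)" by (auto simp: p_def)
    then have "f (i,z) \<noteq> 0" by (simp add: set_pmf_eq pmfpq)
    then have "T i z \<noteq> 0" by (simp add: f_def split: if_splits)
    then have "fst i \<le> z (snd i)" using T(4) by (auto simp: NB_def)
    then show "fst xy \<le> snd xy" using iz by (auto simp: Y_def le_fun_def)
  qed
qed

end
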